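(* A hypergraph ${\cal H}$ is $1$-Sperner if and only if either it has no vertices (that is, ${\cal H}\in\{(\emptyset,\emptyset),(\emptyset,\{\emptyset\})\}$) or it is a safe gluing of two $1$-Sperner hypergraphs each with fewer vertices than ${\cal H}$.
   Context: A hypergraph ${\cal H}=(V,{\cal E})$ consists of a finite vertex set $V$ and a set ${\cal E}$ of subsets of $V$. It is $1$-Sperner if every two distinct hyperedges $e,f$ satisfy $\min\{|e\setminus f|,|f\setminus e|\}=1$. Given vertex-disjoint hypergraphs ${\cal H}_1=(V_1,{\cal E}_1)$, ${\cal H}_2=(V_2,{\cal E}_2)$ and a new vertex $z\notin V_1\cup V_2$, the gluing ${\cal H}_1\odot{\cal H}_2$ has vertex set $V_1\cup V_2\cup\{z\}$ and hyperedge set $\{\{z\}\cup e: e\in{\cal E}_1\}\cup\{V_1\cup e: e\in{\cal E}_2\}$. A gluing is safe if it results in a $1$-Sperner hypergraph; for $1$-Sperner ${\cal H}_1,{\cal H}_2$ this is equivalent to ${\cal E}_1\neq\{V_1\}$ or ${\cal E}_2\neq\{\emptyset\}$. *)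

theory Defs
  imports Main
begin

definition hypergraph :: "'a set \<Rightarrow> 'a set set \<Rightarrow> bool" where
  "hypergraph V E \<longleftrightarrow> finite V \<and> E \<subseteq> Pow V"

definition one_sperner :: "'a set \<Rightarrow> 'a set set \<Rightarrow> bool" where
  "one_sperner V E \<longleftrightarrow> hypergraph V E \<and>
     (\<forall>e\<in>E. \<forall>f\<in>E. e \<noteq> f \<longrightarrow> min (card (e - f)) (card (f - e)) = 1)"

definition gluing :: "'a set \<Rightarrow> 'a set set \<Rightarrow> 'a set \<Rightarrow> 'a set set \<Rightarrow> 'a \<Rightarrow> 'a set \<times> 'a set set" where
  "gluing V1 E1 V2 E2 z =
     (V1 \<union> V2 \<union> {z}, (\<lambda>e. {z} \<union> e) ` E1 \<union> (\<lambda>e. V1 \<union> e) ` E2)"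

definition gluing_ok :: "'a set \<Rightarrow> 'a set set \<Rightarrow> 'a set \<Rightarrow> 'a set set \<Rightarrow> 'a \<Rightarrow> bool" where
  "gluing_ok V1 E1 V2 E2 z \<longleftrightarrow> hypergraph V1 E1 \<and> hypergraph V2 E2 \<and>
     V1 \<inter> V2 = {} \<and> z \<notin> V1 \<union> V2"

definition safe_gluing :: "'a set \<Rightarrow> 'a set set \<Rightarrow> 'a set \<Rightarrow> 'a set set \<Rightarrow> 'a \<Rightarrow> bool" where
  "safe_gluing V1 E1 V2 E2 z \<longleftrightarrow> gluing_ok V1 E1 V2 E2 z \<and>
     one_sperner (fst (gluing V1 E1 V2 E2 z)) (snd (gluing V1 E1 V2 E2 z))"

end

theory Submission
  imports Defs
begin

lemma os_fin: "one_sperner V E \<Longrightarrow> e \<in> E \<Longrightarrow> finite e"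
  unfolding one_sperner_def hypergraph_def by (auto intro: finite_subset)

lemma card_diff_eq:
  assumes "finite e" "finite f"
  shows "card e + card (f - e) = card f + card (e - f)"
proof -
  have "card (e \<union> (f - e)) = card e + card (f - e)"
    using assms by (intro card_Un_disjoint) auto
  moreover have "card (f \<union> (e - f)) = card f + card (e - f)"
    using assms by (intro card_Un_disjoint) auto
  moreover have "e \<union> (f - e) = f \<union> (e - f)" by blast
  ultimately show ?thesis by simp
qed

lemma os_le:
  assumes "one_sperner V E" "e \<in> E" "f \<in> E" "e \<noteq> f" "card e \<le> card f"
  shows "card (e - f) = 1"
proof -
  have m: "min (card (e - f)) (card (f - e)) = 1"
    using assms unfolding one_sperner_def by blast
  have "card e + card (f - e) = card f + card (e - f)"
    using card_diff_eq[OF os_fin[OF assms(1,2)] os_fin[OF assms(1,3)]] .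
  then have "card (e - f) \<le> card (f - e)" using assms(5) by linarith
  then show ?thesis using m by (simp add: min_def split: if_splits)
qed

lemma os_sub:
  assumes "one_sperner V E" "e \<in> E" "f \<in> E" "e \<subseteq> f"
  shows "e = f"
proof (rule ccontr)
  assume "e \<noteq> f"
  then have "min (card (e - f)) (card (f - e)) = 1"
    using assms unfolding one_sperner_def by blast
  moreover have "e - f = {}" using assms(4) by blast
  ultimately show False by simp
qed

lemma two_le:
  assumes "finite S" "w \<in> S" "x \<in> S" "w \<noteq> x"
  shows "2 \<le> card S"
proof -
  have "card {w, x} \<le> card S" using assms by (intro card_mono) auto
  then show ?thesis using assms by simp
qed

lemma card1_eq: "card S = 1 \<Longrightarrow> w \<in> S \<Longrightarrow> S = {w}"
  by (metis card_1_singletonE singletonD)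

lemma good_exists:
  assumes os: "one_sperner V E" and ne: "V \<noteq> {}"
  shows "\<exists>z\<in>V. \<forall>e\<in>E. \<forall>f\<in>E. z \<in> e \<longrightarrow> z \<notin> f \<longrightarrow> e - {z} \<subseteq> f"
proof (cases "E = {}")
  case True
  then show ?thesis using ne by auto
next
  case False
  have finE: "finite E" using os finite_subset[of E "Pow V"] unfolding one_sperner_def hypergraph_def
    by simp
  have "Max (card ` E) \<in> card ` E" using finE False by (intro Max_in) auto
  then obtain e where e0: "e \<in> E" "card e = Max (card ` E)" by auto
  have e: "e \<in> E" "\<forall>g\<in>E. card g \<le> card e" using e0 finE by auto
  have "Min (card ` E) \<in> card ` E" using finE False by (intro Min_in) auto
  then obtain f where f0: "f \<in> E" "card f = Min (card ` E)" by auto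
  have f: "f \<in> E" "\<forall>g\<in>E. card f \<le> card g" using f0 finE by auto
  show ?thesis
  proof (cases "card f = card e")
    case True
    obtain z where "z \<in> V" using ne by auto
    moreover have "\<forall>e'\<in>E. \<forall>f'\<in>E. z \<in> e' \<longrightarrow> z \<notin> f' \<longrightarrow> e' - {z} \<subseteq> f'"
    proof (intro ballI impI subsetI)
      fix e' f' x assume h: "e' \<in> E" "f' \<in> E" "z \<in> e'" "z \<notin> f'" "x \<in> e' - {z}"
      show "x \<in> f'"
      proof (rule ccontr)
        assume "x \<notin> f'"
        then have "2 \<le> card (e' - f')" using h os_fin[OF os h(1)] by (intro two_le[of _ z x]) auto
        moreover have "e' \<noteq> f'" using h by auto
        moreover have "card e' \<le> card e" "card f \<le> card f'" using e(2) f(2) h(1,2) by auto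
        then have "card e' \<le> card f'" using True by linarith
        ultimately show False using os_le[OF os h(1) h(2)] by simp
      qed
    qed
    ultimately show ?thesis by blast
  next
    case False
    then have lt: "card f < card e" using e f by (meson le_neq_implies_less)
    then have fe: "f \<noteq> e" by auto
    have c1: "card (f - e) = 1" using os_le[OF os f(1) e(1) fe] lt by simp
    then obtain w where w: "f - e = {w}" by (meson card_1_singletonE)
    have wV: "w \<in> V" using w f(1) os unfolding one_sperner_def hypergraph_def by blast
    have "\<forall>e'\<in>E. \<forall>f'\<in>E. w \<in> e' \<longrightarrow> w \<notin> f' \<longrightarrow> e' - {w} \<subseteq> f'"
    proof (intro ballI impI subsetI)
      fix e' f' x assume h: "e' \<in> E" "f' \<in> E" "w \<in> e'" "w \<notin> f'" "x \<in> e' - {w}"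
      show "x \<in> f'"
      proof (rule ccontr)
        assume xf: "x \<notin> f'"
        have two: "2 \<le> card (e' - f')" using h xf os_fin[OF os h(1)] by (intro two_le[of _ w x]) auto
        have e'e: "e' \<noteq> e" using h w by auto
        have "card (e' - e) = 1" using os_le[OF os h(1) e(1) e'e] e h by simp
        then have e'sub: "e' - e = {w}" using h w by (intro card1_eq) auto
        have ff': "f \<noteq> f'" using h w by auto
        have "card (f - f') = 1" using os_le[OF os f(1) h(2) ff'] f h by simp
        then have fsub: "f - f' = {w}" using h w by (intro card1_eq) auto
        have ef': "e' \<noteq> f'" using h by auto
        have "\<not> card e' \<le> card f'" using os_le[OF os h(1) h(2) ef'] two by auto
        then have "card (f' - e') = 1" using os_le[OF os h(2) h(1)] ef' by auto
        then obtain w' where w': "f' - e' = {w'}" by (meson card_1_singletonE)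
        have A: "\<And>y. y \<in> e' \<Longrightarrow> y \<noteq> w \<Longrightarrow> y \<in> e" using e'sub by blast
        have B: "\<And>y. y \<in> f' \<Longrightarrow> y \<notin> e' \<Longrightarrow> y = w'" using w' by blast
        have C: "\<And>y. y \<in> f \<Longrightarrow> y \<noteq> w \<Longrightarrow> y \<in> f'" using fsub by blast
        have D: "\<And>y. y \<in> f \<Longrightarrow> y \<noteq> w \<Longrightarrow> y \<in> e" using w by blast
        have xe: "x \<in> e'" "x \<noteq> w" using h by auto
        show False
        proof (cases "w' \<in> e")
          case True
          have "f' \<subseteq> e"
          proof
            fix y assume y: "y \<in> f'"
            show "y \<in> e"
            proof (cases "y \<in> e'")
              case True
              moreover have "y \<noteq> w" using y h(4) by auto
              ultimately show ?thesis using A by simp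
            next
              case False
              then show ?thesis using B y \<open>w' \<in> e\<close> by simp
            qed
          qed
          then have "f' = e" using os_sub[OF os h(2) e(1)] by simp
          then show False using A xe xf by simp
        next
          case False
          have "f \<subseteq> e'"
          proof
            fix y assume y: "y \<in> f"
            show "y \<in> e'"
            proof (cases "y = w")
              case True then show ?thesis using h by simp
            next
              case nw: False
              show ?thesis
              proof (rule ccontr)
                assume "y \<notin> e'"
                then have "y = w'" using B C y nw by simp
                then show False using D y nw \<open>w' \<notin> e\<close> by simp
              qed
            qed
          qed
          then have "f = e'" using os_sub[OF os f(1) h(1)] by simp
          then show False using C xe xf by simp
        qed
      qed
    qed
    then show ?thesis using wV by blast
  qed
qed


lemma sperner_main:
  assumes os: "one_sperner V E" and ne: "V \<noteq> {}"
  shows "\<exists>V1 E1 V2 E2 z. one_sperner V1 E1 \<and> one_sperner V2 E2 \<and>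
        card V1 < card V \<and> card V2 < card V \<and>
        safe_gluing V1 E1 V2 E2 z \<and> gluing V1 E1 V2 E2 z = (V, E)"
proof -
  obtain z where zV: "z \<in> V" and good: "\<forall>e\<in>E. \<forall>f\<in>E. z \<in> e \<longrightarrow> z \<notin> f \<longrightarrow> e - {z} \<subseteq> f"
    using good_exists[OF os ne] by blast
  have finV: "finite V" and EV: "\<And>e. e \<in> E \<Longrightarrow> e \<subseteq> V"
    using os unfolding one_sperner_def hypergraph_def by auto
  have sp: "\<And>e f. e \<in> E \<Longrightarrow> f \<in> E \<Longrightarrow> e \<noteq> f \<Longrightarrow> min (card (e - f)) (card (f - e)) = 1"
    using os unfolding one_sperner_def by blast
  define Ez where "Ez = {e\<in>E. z \<in> e}"
  define En where "En = {f\<in>E. z \<notin> f}"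
  define V1 where "V1 = \<Union>((\<lambda>e. e - {z}) ` Ez)"
  define V2 where "V2 = V - V1 - {z}"
  define E1 where "E1 = (\<lambda>e. e - {z}) ` Ez"
  define E2 where "E2 = (\<lambda>f. f - V1) ` En"
  have V1V: "V1 \<subseteq> V - {z}" unfolding V1_def Ez_def using EV by blast
  have V1f: "\<And>f. f \<in> En \<Longrightarrow> V1 \<subseteq> f" unfolding V1_def Ez_def En_def using good by blast
  have finV1: "finite V1" using V1V finV finite_subset by blast
  have finV2: "finite V2" unfolding V2_def using finV by simp
  have h1: "(\<lambda>e. {z} \<union> e) ` E1 = Ez"
  proof -
    have "(\<lambda>e. {z} \<union> e) ` E1 = (\<lambda>e. {z} \<union> (e - {z})) ` Ez" unfolding E1_def image_image ..
    also have "\<dots> = (\<lambda>e. e) ` Ez" by (rule image_cong) (auto simp: Ez_def)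
    finally show ?thesis by simp
  qed
  have h2: "(\<lambda>e. V1 \<union> e) ` E2 = En"
  proof -
    have "(\<lambda>e. V1 \<union> e) ` E2 = (\<lambda>e. V1 \<union> (e - V1)) ` En" unfolding E2_def image_image ..
    also have "\<dots> = (\<lambda>e. e) ` En" by (rule image_cong) (use V1f in auto)
    finally show ?thesis by simp
  qed
  have EE: "Ez \<union> En = E" unfolding Ez_def En_def by blast
  have VV: "V1 \<union> V2 \<union> {z} = V" unfolding V2_def using V1V zV by blast
  have glue: "gluing V1 E1 V2 E2 z = (V, E)"
    unfolding gluing_def using h1 h2 EE VV by simp
  have hg1: "hypergraph V1 E1"
    unfolding hypergraph_def E1_def V1_def using finV1 V1_def by blast
  have hg2: "hypergraph V2 E2"
    unfolding hypergraph_def E2_def V2_def using finV2 V2_def EV En_def by blast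
  have os1: "one_sperner V1 E1"
    unfolding one_sperner_def
  proof (intro conjI hg1 ballI impI)
    fix a b assume ab: "a \<in> E1" "b \<in> E1" "a \<noteq> b"
    then obtain e e' where ee: "e \<in> Ez" "e' \<in> Ez" "a = e - {z}" "b = e' - {z}"
      unfolding E1_def by blast
    have "a - b = e - e'" "b - a = e' - e" using ee unfolding Ez_def by auto
    moreover have "e \<noteq> e'" using ab ee by auto
    ultimately show "min (card (a - b)) (card (b - a)) = 1" using sp ee unfolding Ez_def by simp
  qed
  have os2: "one_sperner V2 E2"
    unfolding one_sperner_def
  proof (intro conjI hg2 ballI impI)
    fix a b assume ab: "a \<in> E2" "b \<in> E2" "a \<noteq> b"
    then obtain e e' where ee: "e \<in> En" "e' \<in> En" "a = e - V1" "b = e' - V1"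
      unfolding E2_def by blast
    have "a - b = e - e'" "b - a = e' - e" using ee V1f[OF ee(1)] V1f[OF ee(2)] by auto
    moreover have "e \<noteq> e'" using ab ee by auto
    ultimately show "min (card (a - b)) (card (b - a)) = 1" using sp ee unfolding En_def by simp
  qed
  have c1: "card V1 < card V" using V1V zV finV by (intro psubset_card_mono) auto
  have c2: "card V2 < card V" using zV finV unfolding V2_def by (intro psubset_card_mono) auto
  have sg: "safe_gluing V1 E1 V2 E2 z"
    unfolding safe_gluing_def gluing_ok_def using hg1 hg2 glue os V1V unfolding V2_def by auto
  show ?thesis using os1 os2 c1 c2 sg glue by blast
qed

theorem theorem10:
  fixes V :: "'a set" and E :: "'a set set"
  assumes "hypergraph V E"
  shows "one_sperner V E \<longleftrightarrow>
    ((V = {} \<and> (E = {} \<or> E = {{}})) \<or>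
     (\<exists>V1 E1 V2 E2 z. one_sperner V1 E1 \<and> one_sperner V2 E2 \<and>
        card V1 < card V \<and> card V2 < card V \<and>
        safe_gluing V1 E1 V2 E2 z \<and> gluing V1 E1 V2 E2 z = (V, E)))"
proof
  assume os: "one_sperner V E"
  show "(V = {} \<and> (E = {} \<or> E = {{}})) \<or>
     (\<exists>V1 E1 V2 E2 z. one_sperner V1 E1 \<and> one_sperner V2 E2 \<and>
        card V1 < card V \<and> card V2 < card V \<and>
        safe_gluing V1 E1 V2 E2 z \<and> gluing V1 E1 V2 E2 z = (V, E))"
  proof (cases "V = {}")
    case True
    then have "E \<subseteq> {{}}" using assms unfolding hypergraph_def by simp
    then show ?thesis using True by (metis subset_singletonD)
  next
    case False
    then show ?thesis using sperner_main[OF os] by blast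
  qed
next
  assume r: "(V = {} \<and> (E = {} \<or> E = {{}})) \<or>
     (\<exists>V1 E1 V2 E2 z. one_sperner V1 E1 \<and> one_sperner V2 E2 \<and>
        card V1 < card V \<and> card V2 < card V \<and>
        safe_gluing V1 E1 V2 E2 z \<and> gluing V1 E1 V2 E2 z = (V, E))"
  show "one_sperner V E"
  proof (cases "V = {} \<and> (E = {} \<or> E = {{}})")
    case True
    then show ?thesis using assms unfolding one_sperner_def by auto
  next
    case False
    then obtain V1 E1 V2 E2 z where "safe_gluing V1 E1 V2 E2 z" "gluing V1 E1 V2 E2 z = (V, E)"
      using r by blast
    then show ?thesis unfolding safe_gluing_def by simp
  qed
qed

end
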